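(* The numbers $P_{1^{-1}2^{1}3^{-1}4^{-1}6^{3}12^{-1}}(n)$, defined by $\sum_{n\ge0}P_{1^{-1}2^{1}3^{-1}4^{-1}6^{3}12^{-1}}(n)q^n=\frac{f_2f_6^3}{f_1f_3f_4f_{12}}$, form a $3$-convolutive sequence.
   Context: $f_i:=(q^i;q^i)_\infty=\prod_{k\ge1}(1-q^{ik})$. A sequence $(a_n)_{n\ge0}$ is $m$-convolutive if $\sum_{n\ge0}a_{mn}q^n=\big(\sum_{n\ge0}a_nq^n\big)^m$. *)

theory Defs
  imports "HOL-Computational_Algebra.Formal_Power_Series"
begin

text \<open>f_i = (q^i;q^i)_infinity = prod_{k>=1} (1 - q^(i k)) as a formal power series.
  The coefficient of q^n is computed from the finite product over k = 1..n, which
  agrees with the infinite product modulo q^(n+1) for i >= 1.\<close>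
definition f_fps :: "nat \<Rightarrow> rat fps" where
  "f_fps i = Abs_fps (\<lambda>n. fps_nth (\<Prod>k\<in>{1..n}. 1 - fps_X ^ (i * k)) n)"

definition P_gen :: "rat fps" where
  "P_gen = f_fps 2 * f_fps 6 ^ 3 * inverse (f_fps 1 * f_fps 3 * f_fps 4 * f_fps 12)"

definition P :: "nat \<Rightarrow> rat" where
  "P n = fps_nth P_gen n"

definition convolutive :: "nat \<Rightarrow> (nat \<Rightarrow> 'a::comm_ring_1) \<Rightarrow> bool" where
  "convolutive m a \<longleftrightarrow> Abs_fps (\<lambda>n. a (m * n)) = (Abs_fps a) ^ m"

end

theory Submission
  imports Defs
begin

unbundle fps_syntax

definition eqm :: "nat \<Rightarrow> rat fps \<Rightarrow> rat fps \<Rightarrow> bool" where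
  "eqm m A B \<longleftrightarrow> (\<forall>j\<le>m. A $ j = B $ j)"

lemma eqm_refl[simp]: "eqm m A A" by (simp add: eqm_def)
lemma eqm_sym: "eqm m A B \<Longrightarrow> eqm m B A" by (simp add: eqm_def)
lemma eqm_trans: "eqm m A B \<Longrightarrow> eqm m B C \<Longrightarrow> eqm m A C" by (simp add: eqm_def)
lemma eqm_mono: "eqm m A B \<Longrightarrow> m' \<le> m \<Longrightarrow> eqm m' A B" by (simp add: eqm_def)
lemma eqm_add: "eqm m A A' \<Longrightarrow> eqm m B B' \<Longrightarrow> eqm m (A+B) (A'+B')" by (simp add: eqm_def)
lemma eqm_diff: "eqm m A A' \<Longrightarrow> eqm m B B' \<Longrightarrow> eqm m (A-B) (A'-B')" by (simp add: eqm_def)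
lemma eqm_uminus: "eqm m A A' \<Longrightarrow> eqm m (-A) (-A')" by (simp add: eqm_def)

lemma eqm_mult: assumes "eqm m A A'" "eqm m B B'" shows "eqm m (A*B) (A'*B')"
  unfolding eqm_def
proof (intro allI impI)
  fix j assume j: "j \<le> m"
  show "(A*B) $ j = (A'*B') $ j" unfolding fps_mult_nth
    by (rule sum.cong) (use assms j in \<open>auto simp: eqm_def\<close>)
qed

lemma eqm_power: "eqm m A B \<Longrightarrow> eqm m (A^k) (B^k)"
  by (induction k) (auto intro: eqm_mult)

lemma eqm_prod: "(\<And>i. i \<in> S \<Longrightarrow> eqm m (f i) (g i)) \<Longrightarrow> eqm m (prod f S) (prod g S)"
proof (induction S rule: infinite_finite_induct)
  case (insert x F) then show ?case by (auto intro: eqm_mult)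
qed auto

lemma eqm_sum: "(\<And>i. i \<in> S \<Longrightarrow> eqm m (f i) (g i)) \<Longrightarrow> eqm m (sum f S) (sum g S)"
proof (induction S rule: infinite_finite_induct)
  case (insert x F) then show ?case by (auto intro: eqm_add)
qed auto

lemma eqm_inverse: assumes "eqm m A B" "A $ 0 \<noteq> 0" shows "eqm m (inverse A) (inverse B)"
proof -
  have B0: "B $ 0 \<noteq> 0" using assms by (auto simp: eqm_def)
  have "eqm m (inverse A * B) (inverse A * A)" by (rule eqm_mult) (use assms eqm_sym in auto)
  then have "eqm m (inverse A * B) 1" using inverse_mult_eq_1[OF assms(2)] by simp
  then have "eqm m (inverse A * B * inverse B) (1 * inverse B)" by (rule eqm_mult) simp
  then show ?thesis using inverse_mult_eq_1'[OF B0] by (simp add: mult.assoc)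
qed

lemma eqm_all: "(\<And>m. eqm m A B) \<Longrightarrow> A = B"
  by (auto simp: eqm_def fps_eq_iff)

lemma eqm_X_power: "m < t \<Longrightarrow> eqm m (fps_X^t * A) 0"
  by (auto simp: eqm_def fps_X_power_mult_nth)

lemma eqm_X_power': "m < t \<Longrightarrow> eqm m (fps_X^t) 0"
  using eqm_X_power[of m t 1] by simp

lemma eqm_one_plus: "m < t \<Longrightarrow> eqm m (1 + c * fps_X^t) 1"
  using eqm_X_power[of m t c] by (auto simp: eqm_def mult.commute)

lemma eqm_one_minus: "m < t \<Longrightarrow> eqm m (1 - fps_X^t) 1"
  using eqm_X_power'[of m t] by (auto simp: eqm_def)

lemma eqm_one_plus': "m < t \<Longrightarrow> eqm m (1 + fps_X^t) 1"
  using eqm_X_power'[of m t] by (auto simp: eqm_def)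

lemma prod_stab:
  assumes "finite B" "A \<subseteq> B" "\<And>i. i \<in> B - A \<Longrightarrow> eqm m (f i) 1"
  shows "eqm m (prod f B) (prod f A)"
proof -
  have "prod f B = prod f A * prod f (B - A)"
    using assms(1,2) by (metis mult.commute prod.subset_diff)
  moreover have "eqm m (prod f (B - A)) (prod (\<lambda>_. 1) (B - A))"
    by (rule eqm_prod) (use assms(3) in auto)
  ultimately show ?thesis using eqm_mult[of m "prod f A" "prod f A" "prod f (B - A)" 1] by simp
qed

definition FP :: "nat \<Rightarrow> nat \<Rightarrow> rat fps" where
  "FP k N = (\<Prod>j\<in>{1..N}. 1 - fps_X ^ (k * j))"

lemma FP_0[simp]: "k \<ge> 1 \<Longrightarrow> FP k N $ 0 = 1"
  unfolding FP_def by (induction N) (auto simp: prod.nat_ivl_Suc')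

lemma FP_stab: assumes "k \<ge> 1" "m \<le> N" "m \<le> N'" shows "eqm m (FP k N) (FP k N')"
proof -
  have a: "eqm m (FP k M) (FP k m)" if "m \<le> M" for M
    unfolding FP_def
  proof (rule prod_stab)
    fix i assume "i \<in> {1..M} - {1..m}"
    then have "m < i" by auto
    also have "i \<le> k * i" using assms by simp
    finally show "eqm m (1 - fps_X ^ (k * i)) 1" by (rule eqm_one_minus)
  qed (use that in auto)
  show ?thesis using a[of N] a[of N'] assms by (meson eqm_sym eqm_trans)
qed

lemma f_FP: assumes "k \<ge> 1" "m \<le> N" shows "eqm m (f_fps k) (FP k N)"
  unfolding eqm_def
proof (intro allI impI)
  fix j assume j: "j \<le> m"
  have "f_fps k $ j = FP k j $ j" by (simp add: f_fps_def FP_def)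
  also have "\<dots> = FP k N $ j" using FP_stab[of k j j N] assms j by (auto simp: eqm_def)
  finally show "f_fps k $ j = FP k N $ j" .
qed

lemma f_fps_0[simp]: "f_fps k $ 0 = 1"
  by (simp add: f_fps_def)

definition E3 :: "rat fps \<Rightarrow> rat fps" where "E3 H = H oo fps_X ^ 3"

lemma E3_nth: "E3 H $ n = (if 3 dvd n then H $ (n div 3) else 0)"
proof -
  have "E3 H $ n = (\<Sum>i=0..n. H $ i * (if n = 3 * i then 1 else 0))"
    unfolding E3_def fps_compose_nth by (simp add: power_mult[symmetric])
  also have "\<dots> = (\<Sum>i\<in>(if 3 dvd n then {n div 3} else {}). H $ i)"
    by (rule sum.mono_neutral_cong_right) (auto split: if_splits)
  finally show ?thesis by simp
qed

lemma E3_mult: "E3 (A * B) = E3 A * E3 B"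
  unfolding E3_def by (rule fps_compose_mult_distrib) simp
lemma E3_add: "E3 (A + B) = E3 A + E3 B"
  unfolding E3_def by (rule fps_compose_add_distrib)
lemma E3_diff: "E3 (A - B) = E3 A - E3 B"
  unfolding E3_def by (rule fps_compose_sub_distrib)
lemma E3_one[simp]: "E3 1 = 1" unfolding E3_def by simp
lemma E3_power: "E3 (A ^ k) = E3 A ^ k"
  by (induction k) (auto simp: E3_mult)
lemma E3_prod: "E3 (prod f S) = prod (\<lambda>i. E3 (f i)) S"
  unfolding E3_def by (rule fps_compose_prod_distrib) simp
lemma E3_inverse: "A $ 0 \<noteq> 0 \<Longrightarrow> E3 (inverse A) = inverse (E3 A)"
  unfolding E3_def by (rule fps_inverse_compose) auto
lemma E3_Xp: "E3 (fps_X ^ k) = fps_X ^ (3 * k)"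
proof -
  have "fps_X ^ k oo fps_X ^ 3 = ((fps_X :: rat fps) ^ 3) ^ k" by (rule fps_X_power_compose) simp
  then show ?thesis unfolding E3_def by (simp only: power_mult[symmetric])
qed
lemma E3_eqm: "eqm m A B \<Longrightarrow> eqm m (E3 A) (E3 B)"
  unfolding eqm_def E3_nth by auto
lemma E3_inj: "E3 A = E3 B \<Longrightarrow> A = B"
proof (rule fps_ext)
  fix n assume "E3 A = E3 B"
  then have "E3 A $ (3*n) = E3 B $ (3*n)" by simp
  then show "A $ n = B $ n" by (simp add: E3_nth)
qed

lemma E3_FP: "E3 (FP k N) = FP (3*k) N"
  unfolding FP_def E3_prod
proof (rule prod.cong)
  fix j show "E3 (1 - fps_X ^ (k * j)) = 1 - fps_X ^ (3 * k * j)"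
    unfolding E3_diff E3_one E3_Xp by (simp only: mult.assoc)
qed simp

lemma E3_f: assumes "k \<ge> 1" shows "E3 (f_fps k) = f_fps (3*k)"
proof (rule eqm_all)
  fix m
  have "eqm m (E3 (f_fps k)) (E3 (FP k m))" by (rule E3_eqm, rule f_FP) (use assms in auto)
  also have "E3 (FP k m) = FP (3*k) m" by (rule E3_FP)
  finally have "eqm m (E3 (f_fps k)) (FP (3*k) m)" .
  moreover have "eqm m (FP (3*k) m) (f_fps (3*k))" by (rule eqm_sym, rule f_FP) (use assms in auto)
  ultimately show "eqm m (E3 (f_fps k)) (f_fps (3*k))" by (rule eqm_trans)
qed

definition U3 :: "rat fps \<Rightarrow> rat fps" where "U3 H = Abs_fps (\<lambda>n. H $ (3*n))"

definition pr :: "nat \<Rightarrow> rat fps \<Rightarrow> rat fps" where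
  "pr r H = Abs_fps (\<lambda>n. if n mod 3 = r then H $ n else 0)"

definition cls :: "nat \<Rightarrow> rat fps \<Rightarrow> bool" where
  "cls r H \<longleftrightarrow> (\<forall>n. H $ n \<noteq> 0 \<longrightarrow> n mod 3 = r)"

lemma E3_U3: "E3 (U3 H) = pr 0 H"
  by (rule fps_ext) (auto simp: E3_nth U3_def pr_def)

lemma cls_pr: "cls r (pr r H)" by (auto simp: cls_def pr_def)
lemma pr_decomp: "H = pr 0 H + pr 1 H + pr 2 H"
  by (rule fps_ext) (auto simp: pr_def)
lemma pr_add: "pr r (A + B) = pr r A + pr r B"
  by (rule fps_ext) (auto simp: pr_def)
lemma pr_cls: "cls s W \<Longrightarrow> r < 3 \<Longrightarrow> s < 3 \<Longrightarrow> pr r W = (if r = s then W else 0)"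
  by (rule fps_ext) (auto simp: pr_def cls_def)
lemma cls_E3: "cls 0 (E3 H)" by (auto simp: cls_def E3_nth)
lemma cls_0: "cls r 0" by (simp add: cls_def)
lemma cls_add: "cls r A \<Longrightarrow> cls r B \<Longrightarrow> cls r (A + B)" unfolding cls_def by (metis add_0 fps_add_nth)
lemma cls_uminus: "cls r A \<Longrightarrow> cls r (- A)" by (auto simp: cls_def)

lemma cls_mult: assumes "cls i A" "cls j B" shows "cls ((i+j) mod 3) (A * B)"
  unfolding cls_def
proof (intro allI impI)
  fix n assume "(A * B) $ n \<noteq> 0"
  then obtain l where l: "l \<in> {0..n}" "A $ l * B $ (n - l) \<noteq> 0"
    unfolding fps_mult_nth by (meson sum.neutral)
  then have "l mod 3 = i" "(n - l) mod 3 = j" using assms by (auto simp: cls_def)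
  moreover have "n = l + (n - l)" using l by auto
  ultimately show "n mod 3 = (i + j) mod 3" by (metis mod_add_eq)
qed

lemma cls0_E3U3: "cls 0 H \<Longrightarrow> H = E3 (U3 H)"
  by (rule fps_ext) (auto simp: E3_nth U3_def cls_def)

lemma cls_inverse: assumes "cls 0 H" "H $ 0 \<noteq> 0" shows "cls 0 (inverse H)"
proof -
  have "inverse H = inverse (E3 (U3 H))" using cls0_E3U3[OF assms(1)] by simp
  also have "\<dots> = E3 (inverse (U3 H))" by (rule E3_inverse[symmetric]) (use assms in \<open>simp add: U3_def\<close>)
  finally have "inverse H = E3 (inverse (U3 H))" .
  then show ?thesis by (simp add: cls_E3)
qed

definition NN :: "rat fps \<Rightarrow> rat fps" where
  "NN H = pr 0 H ^ 3 + pr 1 H ^ 3 + pr 2 H ^ 3 - 3 * pr 0 H * pr 1 H * pr 2 H"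

lemma pr_pp: assumes "r < 3" "i < 3" "j < 3"
  shows "pr r (pr i A * pr j B) = (if r = (i+j) mod 3 then pr i A * pr j B else 0)"
  by (rule pr_cls[OF cls_mult[OF cls_pr cls_pr]]) (use assms in auto)

lemma pr_mult:
  fixes A B :: "rat fps"
  defines "a0 \<equiv> pr 0 A" and "a1 \<equiv> pr 1 A" and "a2 \<equiv> pr 2 A"
  defines "b0 \<equiv> pr 0 B" and "b1 \<equiv> pr 1 B" and "b2 \<equiv> pr 2 B"
  shows "pr 0 (A*B) = a0*b0 + a1*b2 + a2*b1"
    and "pr 1 (A*B) = a0*b1 + a1*b0 + a2*b2"
    and "pr 2 (A*B) = a0*b2 + a2*b0 + a1*b1"
proof -
  have dA: "A = a0+a1+a2" unfolding assms by (rule pr_decomp)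
  have dB: "B = b0+b1+b2" unfolding assms by (rule pr_decomp)
  have t: "pr r (a0*b0) = (if r = 0 then a0*b0 else 0)" "pr r (a0*b1) = (if r = 1 then a0*b1 else 0)"
     "pr r (a0*b2) = (if r = 2 then a0*b2 else 0)" "pr r (a1*b0) = (if r = 1 then a1*b0 else 0)"
     "pr r (a1*b1) = (if r = 2 then a1*b1 else 0)" "pr r (a1*b2) = (if r = 0 then a1*b2 else 0)"
     "pr r (a2*b0) = (if r = 2 then a2*b0 else 0)" "pr r (a2*b1) = (if r = 0 then a2*b1 else 0)"
     "pr r (a2*b2) = (if r = 1 then a2*b2 else 0)" if "r < 3" for r
    unfolding assms using that by (simp_all add: pr_pp)
  have e: "pr r (A*B) = pr r (a0*b0) + (pr r (a1*b0) + (pr r (a2*b0) + (pr r (a0*b1) + (pr r (a1*b1)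
     + (pr r (a2*b1) + (pr r (a0*b2) + (pr r (a1*b2) + pr r (a2*b2))))))))" for r
    by (subst dA, subst dB) (simp only: distrib_left distrib_right pr_add add.assoc)
  show "pr 0 (A*B) = a0*b0 + a1*b2 + a2*b1" unfolding e by (simp add: t)
  show "pr 1 (A*B) = a0*b1 + a1*b0 + a2*b2" unfolding e by (simp add: t)
  show "pr 2 (A*B) = a0*b2 + a2*b0 + a1*b1" unfolding e by (simp add: t)
qed

lemma NN_poly: "((a0*b0 + a1*b2 + a2*b1)^3 + (a0*b1 + a1*b0 + a2*b2)^3 + (a0*b2 + a2*b0 + a1*b1)^3 - 3*(a0*b0 + a1*b2 + a2*b1)*(a0*b1 + a1*b0 + a2*b2)*(a0*b2 + a2*b0 + a1*b1))
  = (a0^3+a1^3+a2^3 - 3*a0*a1*a2) * (b0^3+b1^3+b2^3-3*b0*b1*b2)" for a0 a1 a2 b0 b1 b2 :: "'a::comm_ring_1"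
  by (simp add: algebra_simps power3_eq_cube)

lemma NN_mult: "NN (A * B) = NN A * NN B"
  unfolding NN_def pr_mult by (rule NN_poly)

lemma pr_one: "pr 0 1 = 1" "pr 1 1 = 0" "pr 2 1 = 0"
  by (auto intro!: fps_ext simp: pr_def)

lemma NN_one[simp]: "NN 1 = 1" unfolding NN_def pr_one by simp

lemma pr_eqm: "eqm m A B \<Longrightarrow> eqm m (pr r A) (pr r B)"
  by (auto simp: eqm_def pr_def)

lemma NN_eqm: "eqm m A B \<Longrightarrow> eqm m (NN A) (NN B)"
  unfolding NN_def
  by (intro eqm_add eqm_diff eqm_mult eqm_power pr_eqm) auto

lemma NN_prod: "NN (prod f S) = prod (\<lambda>i. NN (f i)) S"
proof (induction S rule: infinite_finite_induct)
  case (insert x F) then show ?case by (simp add: NN_mult)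
qed auto

lemma NN_0: "NN A $ 0 = (A $ 0)^3"
proof -
  have "pr 0 A $ 0 = A $ 0" "pr 1 A $ 0 = 0" "pr 2 A $ 0 = 0" by (auto simp: pr_def)
  then show ?thesis unfolding NN_def by (simp add: power3_eq_cube)
qed

lemma NN_inverse: assumes "A $ 0 \<noteq> 0" shows "NN (inverse A) = inverse (NN A)"
proof -
  have "NN A * NN (inverse A) = 1"
    using NN_mult[of A "inverse A"] inverse_mult_eq_1'[OF assms] by simp
  then show ?thesis by (rule fps_inverse_unique[symmetric])
qed

lemma pr_cls0_mult: assumes "cls 0 C" shows "pr 0 (C * H) = C * pr 0 H"
proof -
  have "pr 0 C = C" "pr 1 C = 0" "pr 2 C = 0" using pr_cls[OF assms] by auto
  then show ?thesis by (simp add: pr_mult)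
qed

lemma pr_1mX: "pr r (1 - fps_X ^ t) = (if r = 0 then 1 else 0) - (if t mod 3 = r then fps_X ^ t else 0)"
  by (rule fps_ext) (auto simp: pr_def)

lemma NN_1mX_nd: assumes "\<not> 3 dvd t" shows "NN (1 - fps_X ^ t) = 1 - fps_X ^ (3 * t)"
proof -
  have "t mod 3 = 1 \<or> t mod 3 = 2" using assms by presburger
  then have "NN (1 - fps_X ^ t) = 1 + (- (fps_X ^ t)) ^ 3"
    unfolding NN_def pr_1mX by (auto simp: power3_eq_cube)
  also have "\<dots> = 1 - fps_X ^ (3 * t)" by (simp add: power_mult[symmetric] mult.commute)
  finally show ?thesis .
qed

lemma NN_1mX_d: assumes "3 dvd t" shows "NN (1 - fps_X ^ t) = (1 - fps_X ^ t) ^ 3"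
proof -
  have "t mod 3 = 0" using assms by auto
  then show ?thesis unfolding NN_def pr_1mX by auto
qed

lemma group3: "(\<Prod>i\<in>{1..3*(M::nat)}. h i) = (\<Prod>t<M. h (3*t+1) * h (3*t+2) * h (3*t+3))"
proof (induction M)
  case (Suc M)
  have e: "3 * Suc M = Suc (Suc (Suc (3 * M)))" by simp
  have "(\<Prod>i\<in>{1..3*Suc M}. h i) = h (3*M+3) * (h (3*M+2) * (h (3*M+1) * (\<Prod>i\<in>{1..3*M}. h i)))"
    unfolding e by (subst prod.nat_ivl_Suc', simp)+ (simp add: numeral_3_eq_3)
  also have "\<dots> = (\<Prod>t<Suc M. h (3*t+1) * h (3*t+2) * h (3*t+3))"
    unfolding Suc.IH by (simp add: algebra_simps)
  finally show ?case .
qed simp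

lemma group2: "(\<Prod>i\<in>{1..2*(M::nat)}. h i) = (\<Prod>t<M. h (2*t+1) * h (2*t+2))"
proof (induction M)
  case (Suc M)
  have e: "2 * Suc M = Suc (Suc (2 * M))" by simp
  have "(\<Prod>i\<in>{1..2*Suc M}. h i) = h (2*M+2) * (h (2*M+1) * (\<Prod>i\<in>{1..2*M}. h i))"
    unfolding e by (subst prod.nat_ivl_Suc', simp)+ (simp add: numeral_2_eq_2)
  also have "\<dots> = (\<Prod>t<Suc M. h (2*t+1) * h (2*t+2))"
    unfolding Suc.IH by (simp add: algebra_simps)
  finally show ?case .
qed simp

lemma FP_shift: "FP k M = (\<Prod>t<M. 1 - fps_X ^ (k * (t+1)))"
  unfolding FP_def by (rule prod.reindex_bij_witness[of _ "\<lambda>t. t+1" "\<lambda>j. j - 1"]) auto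

lemma NN_FP:
  assumes "k = 1 \<or> k = 2"
  shows "NN (FP k (3*M)) * FP (9*k) M = FP (3*k) (3*M) * FP (3*k) M ^ 3"
proof -
  have nd: "\<not> 3 dvd (k * (3*t+1))" "\<not> 3 dvd (k * (3*t+2))" for t
    using assms by (elim disjE; presburger)+
  have d: "3 dvd (k * (3*t+3))" for t by auto
  have "NN (FP k (3*M)) = (\<Prod>t<M. (1 - fps_X^(3*(k*(3*t+1)))) * (1 - fps_X^(3*(k*(3*t+2))))
          * (1 - fps_X^(k*(3*t+3)))^3)"
    unfolding FP_def NN_prod group3 NN_mult NN_1mX_nd[OF nd(1)] NN_1mX_nd[OF nd(2)] NN_1mX_d[OF d]
    by simp
  also have "\<dots> = (\<Prod>t<M. (1 - fps_X^(3*k*(3*t+1))) * (1 - fps_X^(3*k*(3*t+2))))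
          * FP (3*k) M ^ 3"
    unfolding FP_shift prod.distrib prod_power_distrib[symmetric]
    by (simp add: algebra_simps)
  finally have a: "NN (FP k (3*M)) = (\<Prod>t<M. (1 - fps_X^(3*k*(3*t+1))) * (1 - fps_X^(3*k*(3*t+2))))
          * FP (3*k) M ^ 3" .
  have b: "FP (3*k) (3*M) = (\<Prod>t<M. (1 - fps_X^(3*k*(3*t+1))) * (1 - fps_X^(3*k*(3*t+2)))) * FP (9*k) M"
    unfolding FP_shift[of "9*k"] unfolding FP_def group3 prod.distrib[symmetric]
    by (rule prod.cong) (simp_all add: algebra_simps)
  show ?thesis unfolding a b by (simp add: algebra_simps)
qed

fun qb :: "rat fps \<Rightarrow> nat \<Rightarrow> nat \<Rightarrow> rat fps" where
  "qb Q 0 i = (if i = 0 then 1 else 0)"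
| "qb Q (Suc m) i = (if i = 0 then 1 else qb Q m i + Q ^ (Suc m - i) * qb Q m (i - 1))"

definition qd :: "rat fps \<Rightarrow> nat \<Rightarrow> rat fps" where
  "qd Q m = (\<Prod>j\<in>{1..m}. 1 - Q ^ j)"

lemma qd_0[simp]: "qd Q 0 = 1" by (simp add: qd_def)
lemma qd_Suc: "qd Q (Suc m) = qd Q m * (1 - Q ^ Suc m)"
  unfolding qd_def by (simp add: prod.nat_ivl_Suc' mult.commute)

lemma qb_gt: "m < i \<Longrightarrow> qb Q m i = 0"
  by (induction m arbitrary: i) auto

lemma qb_0[simp]: "qb Q m 0 = 1" by (cases m) auto

lemma qb_diag: "qb Q m m = 1"
  by (induction m) (auto simp: qb_gt)

lemma qb_qd: "i \<le> m \<Longrightarrow> qb Q m i * qd Q i * qd Q (m - i) = qd Q m"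
proof (induction m arbitrary: i)
  case 0 then show ?case by simp
next
  case (Suc m)
  show ?case
  proof (cases "i = 0")
    case True then show ?thesis by simp
  next
    case False
    show ?thesis
    proof (cases "i = Suc m")
      case True
      then show ?thesis by (simp add: qb_gt qb_diag)
    next
      case False
      with \<open>i \<noteq> 0\<close> Suc.prems obtain i' where i': "i = Suc i'" "i' < m"
        by (metis le_SucE not0_implies_Suc Suc_le_lessD)
      have h1: "qb Q m i * qd Q i * qd Q (m - i) = qd Q m" using Suc.IH[of i] i' by simp
      have h2: "qb Q m i' * qd Q i' * qd Q (m - i') = qd Q m" using Suc.IH[of i'] i' by simp
      have mi: "m - i' = Suc (m - i)" "Suc m - i = m - i'" using i' by auto
      have pw: "Q ^ (m - i') * Q ^ Suc i' = Q ^ Suc m"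
        using i' by (simp add: power_add[symmetric])
      have "qb Q (Suc m) i * qd Q i * qd Q (Suc m - i)
          = qb Q m i * qd Q i * qd Q (m - i') + Q ^ (m - i') * qb Q m i' * qd Q i * qd Q (m - i')"
        using i' by (simp add: mi algebra_simps)
      also have "\<dots> = (qb Q m i * qd Q i * qd Q (m - i)) * (1 - Q ^ (m - i'))
           + Q ^ (m - i') * (1 - Q ^ Suc i') * (qb Q m i' * qd Q i' * qd Q (m - i'))"
        unfolding mi(1) qd_Suc i'(1) by (simp add: mi algebra_simps)
      also have "\<dots> = qd Q m * (1 - Q ^ (m - i') + Q ^ (m - i') - Q ^ (m - i') * Q ^ Suc i')"
        unfolding h1 h2 by (simp add: algebra_simps)
      also have "\<dots> = qd Q (Suc m)" unfolding pw qd_Suc by simp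
      finally show ?thesis .
    qed
  qed
qed

fun tri :: "nat \<Rightarrow> nat" where
  "tri 0 = 0"
| "tri (Suc i) = tri i + i"

lemma tri_sum: "(\<Sum>j<n. j) = tri n" by (induction n) auto
lemma tri_2: "2 * int (tri i) = int i * (int i - 1)"
  by (induction i) (auto simp: algebra_simps)

lemma rothe:
  fixes u v Q :: "rat fps"
  shows "(\<Prod>j<m. u + v * Q ^ j) = (\<Sum>i\<le>m. qb Q m i * Q ^ tri i * v ^ i * u ^ (m - i))"
proof (induction m)
  case 0 then show ?case by simp
next
  case (Suc m)
  define T where "T i = qb Q m i * Q ^ tri i * v ^ i * u ^ (m - i)" for i
  have "(\<Prod>j<Suc m. u + v * Q ^ j) = (\<Sum>i\<le>m. T i) * (u + v * Q ^ m)"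
    using Suc by (simp add: T_def)
  also have "\<dots> = (\<Sum>i\<le>m. T i * u) + (\<Sum>i\<le>m. T i * (v * Q ^ m))"
    by (simp only: distrib_left sum_distrib_right)
  also have "(\<Sum>i\<le>m. T i * (v * Q ^ m)) = (\<Sum>i\<le>m. T i * v * Q ^ m)"
    by (simp only: mult.assoc)
  finally have L: "(\<Prod>j<Suc m. u + v * Q ^ j) = (\<Sum>i\<le>m. T i * u) + (\<Sum>i\<le>m. T i * v * Q ^ m)" .
  have A: "(\<Sum>i\<le>m. T i * u) = u ^ Suc m + (\<Sum>i\<le>m. qb Q m (Suc i) * Q ^ tri (Suc i) * v ^ Suc i * u ^ (m - i))"
  proof -
    have "(\<Sum>i\<le>m. T i * u) = T 0 * u + (\<Sum>i<m. T (Suc i) * u)"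
      by (cases m) (simp, simp only: sum.atMost_Suc_shift lessThan_Suc_atMost)
    also have "(\<Sum>i<m. T (Suc i) * u) = (\<Sum>i\<le>m. qb Q m (Suc i) * Q ^ tri (Suc i) * v ^ Suc i * u ^ (m - i))"
    proof -
      have "(\<Sum>i\<le>m. qb Q m (Suc i) * Q ^ tri (Suc i) * v ^ Suc i * u ^ (m - i))
          = (\<Sum>i<m. qb Q m (Suc i) * Q ^ tri (Suc i) * v ^ Suc i * u ^ (m - i))"
        by (simp only: lessThan_Suc_atMost[symmetric] sum.lessThan_Suc) (simp add: qb_gt)
      also have "\<dots> = (\<Sum>i<m. T (Suc i) * u)"
      proof (rule sum.cong)
        fix i assume "i \<in> {..<m}"
        then have e: "m - i = Suc (m - Suc i)" by auto
        show "qb Q m (Suc i) * Q ^ tri (Suc i) * v ^ Suc i * u ^ (m - i) = T (Suc i) * u"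
          unfolding T_def e power_Suc2 by (simp only: mult.assoc)
      qed simp
      finally show ?thesis by simp
    qed
    finally show ?thesis by (simp add: T_def qb_gt)
  qed
  have B: "(\<Sum>i\<le>m. T i * v * Q ^ m) = (\<Sum>i\<le>m. Q ^ (m - i) * qb Q m i * Q ^ tri (Suc i) * v ^ Suc i * u ^ (m - i))"
  proof (rule sum.cong)
    fix i assume "i \<in> {..m}"
    then have "Q ^ tri i * Q ^ m = Q ^ (m - i) * Q ^ tri (Suc i)"
      by (simp add: power_add[symmetric] add.commute)
    then show "T i * v * Q ^ m = Q ^ (m - i) * qb Q m i * Q ^ tri (Suc i) * v ^ Suc i * u ^ (m - i)"
      unfolding T_def by (simp add: algebra_simps)
  qed simp
  have R: "(\<Sum>i\<le>Suc m. qb Q (Suc m) i * Q ^ tri i * v ^ i * u ^ (Suc m - i))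
     = u ^ Suc m + (\<Sum>i\<le>m. qb Q m (Suc i) * Q ^ tri (Suc i) * v ^ Suc i * u ^ (m - i))
       + (\<Sum>i\<le>m. Q ^ (m - i) * qb Q m i * Q ^ tri (Suc i) * v ^ Suc i * u ^ (m - i))"
  proof -
    have "(\<Sum>i\<le>Suc m. qb Q (Suc m) i * Q ^ tri i * v ^ i * u ^ (Suc m - i))
       = u ^ Suc m + (\<Sum>i\<le>m. qb Q (Suc m) (Suc i) * Q ^ tri (Suc i) * v ^ Suc i * u ^ (Suc m - Suc i))"
      by (simp only: sum.atMost_Suc_shift) simp
    also have "(\<Sum>i\<le>m. qb Q (Suc m) (Suc i) * Q ^ tri (Suc i) * v ^ Suc i * u ^ (Suc m - Suc i))
      = (\<Sum>i\<le>m. qb Q m (Suc i) * Q ^ tri (Suc i) * v ^ Suc i * u ^ (m - i)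
          + Q ^ (m - i) * qb Q m i * Q ^ tri (Suc i) * v ^ Suc i * u ^ (m - i))"
      by (rule sum.cong) (simp_all only: qb.simps diff_Suc_Suc nat.distinct if_False diff_Suc_1 distrib_right)
    finally show ?thesis by (simp only: sum.distrib add.assoc)
  qed
  show ?case unfolding L A B R by simp
qed

definition eei :: "nat \<Rightarrow> nat \<Rightarrow> int \<Rightarrow> int" where
  "eei c a k = (int c * k * (k - 1)) div 2 + int a * k"

lemma eei2: "2 * eei c a k = int c * k * (k - 1) + 2 * int a * k"
proof -
  have "even (k * (k - 1))" by (cases "even k") auto
  then have "even (int c * k * (k - 1))" by (simp add: mult.assoc)
  then show ?thesis unfolding eei_def by (simp add: algebra_simps)
qed

lemma eei_bound:
  assumes "a < c"
  shows "0 \<le> eei c a k" "\<bar>k\<bar> \<le> eei c a k + 1"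
proof -
  have c1: "int c \<ge> 1" and ac: "int a \<le> int c - 1" using assms by auto
  have kk: "k * (k - 1) \<ge> 0" by (cases "k \<ge> 1") (auto intro: mult_nonneg_nonneg mult_nonpos_nonpos)
  have "2 * \<bar>k\<bar> \<le> int c * k * (k - 1) + 2 * int a * k + 2 \<and> 0 \<le> int c * k * (k - 1) + 2 * int a * k"
  proof (cases "k \<ge> 1")
    case True
    have e1: "int c * k * (k - 1) + 2 * int a * k + 2 - 2 * \<bar>k\<bar>
       = (int c - 1) * (k * (k - 1)) + (k - 1) * (k - 2) + 2 * (int a * k)"
      using True by (simp add: algebra_simps)
    have e2: "int c * k * (k - 1) + 2 * int a * k = int c * (k * (k - 1)) + 2 * (int a * k)"
      by (simp add: algebra_simps)
    have "(int c - 1) * (k * (k - 1)) \<ge> 0" using c1 kk by simp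
    moreover have "(k - 1) * (k - 2) \<ge> 0" using True by (cases "k = 1") (auto intro!: mult_nonneg_nonneg)
    moreover have "int a * k \<ge> 0" using True by auto
    moreover have "int c * (k * (k - 1)) \<ge> 0" using c1 kk by simp
    ultimately show ?thesis unfolding e2 using e1 e2 by linarith
  next
    case False
    define j where "j = - k"
    have j0: "j \<ge> 0" using False j_def by auto
    have "int a * j \<le> (int c - 1) * j" by (rule mult_right_mono) (use ac j0 in auto)
    moreover have "int c * (j * (j - 1)) \<ge> 0"
      using j0 c1 by (cases "j = 0") (auto intro!: mult_nonneg_nonneg)
    moreover have "int c * k * (k - 1) + 2 * int a * k = int c * j * (j + 1) - 2 * int a * j"
      by (simp add: j_def algebra_simps)
    ultimately show ?thesis using j0 j_def by (auto simp: algebra_simps)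
  qed
  then show "0 \<le> eei c a k" "\<bar>k\<bar> \<le> eei c a k + 1" using eei2[of c a k] by linarith+
qed

definition LL :: "nat \<Rightarrow> nat \<Rightarrow> nat \<Rightarrow> rat fps" where
  "LL a c n = (\<Prod>t<n. 1 + fps_X ^ (a + c * t)) * (\<Prod>j\<in>{1..n}. 1 + fps_X ^ (c * j - a))"

lemma fin_jtp:
  assumes "a < c" "n \<ge> 1"
  shows "LL a c n = (\<Sum>i\<le>2*n. qb (fps_X ^ c) (2*n) i * fps_X ^ nat (eei c a (int i - int n)))"
proof -
  define u :: "rat fps" where "u = fps_X ^ (c * n - a)"
  define Q :: "rat fps" where "Q = fps_X ^ c"
  define S where "S = c * tri n + n * (c * n - a)"
  have an: "a \<le> c * n" using assms by (metis le_trans less_imp_le mult.right_neutral mult_le_mono2)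
  have rot: "(\<Prod>j<2*n. u + 1 * Q ^ j) = (\<Sum>i\<le>2*n. qb Q (2*n) i * Q ^ tri i * 1 ^ i * u ^ (2*n - i))"
    by (rule rothe)
  have split: "(\<Prod>j<2*n. u + Q ^ j) = (\<Prod>j<n. u + Q ^ j) * (\<Prod>t<n. u + Q ^ (t + n))"
  proof -
    have un: "{..<2*n} = {..<n} \<union> {n..<2*n}" by auto
    have "(\<Prod>j\<in>{..<n} \<union> {n..<2*n}. u + Q ^ j) = (\<Prod>j<n. u + Q ^ j) * (\<Prod>j\<in>{n..<2*n}. u + Q ^ j)"
      by (rule prod.union_disjoint) auto
    then have "(\<Prod>j<2*n. u + Q ^ j) = (\<Prod>j<n. u + Q ^ j) * (\<Prod>j\<in>{n..<2*n}. u + Q ^ j)"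
      by (simp only: un)
    also have "(\<Prod>j\<in>{n..<2*n}. u + Q ^ j) = (\<Prod>t\<in>{0..<n}. u + Q ^ (t + n))"
      using prod.shift_bounds_nat_ivl[of "\<lambda>j. u + Q ^ j" 0 n n] by (simp add: mult_2)
    finally show ?thesis by (simp add: atLeast0LessThan)
  qed
  have p1: "(\<Prod>j<n. u + Q ^ j) = fps_X ^ (c * tri n) * (\<Prod>j\<in>{1..n}. 1 + fps_X ^ (c * j - a))"
  proof -
    have f: "u + Q ^ j = fps_X ^ (c * j) * (1 + fps_X ^ (c * (n - j) - a))" if "j < n" for j
    proof -
      define d where "d = n - j"
      have d: "n = j + d" "d \<ge> 1" using that by (auto simp: d_def)
      have "c * d \<ge> c" using d by simp
      then have acd: "a < c * d" using assms by linarith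
      have "c * (n - j) = c * d" "c * n = c * j + c * d" using d by (auto simp: algebra_simps)
      then have "c * j + (c * (n - j) - a) = c * n - a" using acd by arith
      then show ?thesis unfolding u_def Q_def
        by (simp add: algebra_simps power_mult[symmetric] power_add[symmetric])
    qed
    have "(\<Prod>j<n. u + Q ^ j) = (\<Prod>j<n. fps_X ^ (c * j)) * (\<Prod>j<n. 1 + fps_X ^ (c * (n - j) - a))"
      by (simp add: f prod.distrib)
    also have "(\<Prod>j<n. fps_X ^ (c * j)) = (fps_X :: rat fps) ^ (c * tri n)"
      by (simp add: power_sum[symmetric] sum_distrib_left[symmetric] tri_sum)
    also have "(\<Prod>j<n. 1 + fps_X ^ (c * (n - j) - a)) = (\<Prod>j\<in>{1..n}. 1 + (fps_X :: rat fps) ^ (c * j - a))"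
      by (rule prod.reindex_bij_witness[of _ "\<lambda>j. n - j" "\<lambda>j. n - j"]) auto
    finally show ?thesis .
  qed
  have p2: "(\<Prod>t<n. u + Q ^ (t + n)) = fps_X ^ (n * (c * n - a)) * (\<Prod>t<n. 1 + fps_X ^ (a + c * t))"
  proof -
    have f: "u + Q ^ (t + n) = fps_X ^ (c * n - a) * (1 + fps_X ^ (a + c * t))" for t
    proof -
      have "c * n - a + (a + c * t) = c * (t + n)" using an by (simp add: algebra_simps)
      then show ?thesis unfolding u_def Q_def
        by (simp add: algebra_simps power_mult[symmetric] power_add[symmetric])
    qed
    show ?thesis by (simp add: f prod.distrib power_mult[symmetric] mult.commute)
  qed
  have lhs: "(\<Prod>j<2*n. u + Q ^ j) = fps_X ^ S * LL a c n"
    unfolding split p1 p2 LL_def S_def by (simp add: power_add algebra_simps)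
  have rhs: "qb Q (2*n) i * Q ^ tri i * 1 ^ i * u ^ (2*n - i)
       = fps_X ^ S * (qb (fps_X ^ c) (2*n) i * fps_X ^ nat (eei c a (int i - int n)))" if "i \<le> 2*n" for i
  proof -
    have e2: "2 * int (c * tri i + (c * n - a) * (2 * n - i)) = 2 * (int S + eei c a (int i - int n))"
    proof -
      have i1: "int (c*n - a) = int c * int n - int a" using an by (simp add: of_nat_diff)
      have i2: "int (2*n - i) = 2 * int n - int i" using that by (simp add: of_nat_diff)
      have "2 * int (c * tri i + (c * n - a) * (2 * n - i))
          = 2 * (int c * int (tri i) + int (c * n - a) * int (2 * n - i))"
        by (simp only: of_nat_add of_nat_mult)
      also have "\<dots> = int c * (2 * int (tri i)) + 2 * (int c * int n - int a) * (2 * int n - int i)"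
        unfolding i1 i2 by (simp add: algebra_simps)
      also have "\<dots> = int c * (int i * (int i - 1)) + 2 * (int c * int n - int a) * (2 * int n - int i)"
        by (simp add: tri_2)
      also have "\<dots> = int c * (int n * (int n - 1)) + 2 * int n * (int c * int n - int a)
          + (int c * (int i - int n) * ((int i - int n) - 1) + 2 * int a * (int i - int n))"
        by (simp add: algebra_simps)
      also have "\<dots> = 2 * (int S + eei c a (int i - int n))"
      proof -
        have iS: "2 * int S = int c * (2 * int (tri n)) + 2 * int n * (int c * int n - int a)"
          unfolding S_def by (simp only: of_nat_add of_nat_mult i1) (simp add: algebra_simps)
        show ?thesis unfolding distrib_left iS eei2 tri_2 by (simp add: algebra_simps)
      qed
      finally show ?thesis .
    qed
    have h: "int (c * tri i + (c * n - a) * (2 * n - i)) = int S + eei c a (int i - int n)"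
      using e2 by (subst (asm) mult_cancel_left) simp
    have "int (c * tri i + (c * n - a) * (2 * n - i)) = int (S + nat (eei c a (int i - int n)))"
      using h eei_bound(1)[OF assms(1), of "int i - int n"] by simp
    then have "c * tri i + (c * n - a) * (2 * n - i) = S + nat (eei c a (int i - int n))"
      by (simp only: of_nat_eq_iff)
    then show ?thesis unfolding u_def Q_def
      by (simp add: power_mult[symmetric] power_add[symmetric] mult.commute mult.left_commute)
  qed
  have "fps_X ^ S * LL a c n = fps_X ^ S * (\<Sum>i\<le>2*n. qb (fps_X ^ c) (2*n) i * fps_X ^ nat (eei c a (int i - int n)))"
    unfolding lhs[symmetric] sum_distrib_left using rot rhs by simp
  then show ?thesis by simp
qed

declare eqm_trans[trans]

definition Theta :: "nat \<Rightarrow> nat \<Rightarrow> rat fps" where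
  "Theta a c = Abs_fps (\<lambda>j. of_nat (card {k::int. eei c a k = int j}))"

lemma qd_FP: "qd (fps_X ^ c) i = FP c i"
  unfolding qd_def FP_def by (simp add: power_mult[symmetric])

lemma term_eqm:
  assumes "a < c" "2 * m + 2 \<le> n" "i \<le> 2 * n"
  shows "eqm m (qb (fps_X ^ c) (2*n) i * f_fps c * fps_X ^ nat (eei c a (int i - int n)))
                (fps_X ^ nat (eei c a (int i - int n)))"
proof -
  define e where "e = nat (eei c a (int i - int n))"
  define B where "B = qb (fps_X ^ c) (2*n) i"
  have c1: "c \<ge> 1" using assms by auto
  show ?thesis unfolding e_def[symmetric] B_def[symmetric]
  proof (cases "m < e")
    case True
    have h1: "eqm m (fps_X ^ e * (B * f_fps c)) 0" by (rule eqm_X_power) fact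
    have h2: "eqm m 0 (fps_X ^ e)" by (rule eqm_sym, rule eqm_X_power') fact
    have "eqm m (fps_X ^ e * (B * f_fps c)) (fps_X ^ e)" by (rule eqm_trans[OF h1 h2])
    then show "eqm m (B * f_fps c * fps_X ^ e) (fps_X ^ e)" by (simp only: mult.commute[of "B * f_fps c"])
  next
    case False
    have b: "\<bar>int i - int n\<bar> \<le> eei c a (int i - int n) + 1" by (rule eei_bound(2)) fact
    have "eei c a (int i - int n) = int e" using eei_bound(1)[OF assms(1)] e_def by simp
    then have "\<bar>int i - int n\<bar> \<le> int m + 1" using b False by linarith
    then have i1: "m \<le> i" and i2: "m \<le> 2 * n - i" using assms by linarith+
    have q: "B * qd (fps_X ^ c) i * qd (fps_X ^ c) (2*n - i) = qd (fps_X ^ c) (2*n)"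
      unfolding B_def by (rule qb_qd) fact
    have "eqm m (B * f_fps c * f_fps c) (B * qd (fps_X ^ c) i * qd (fps_X ^ c) (2*n - i))"
      unfolding qd_FP using c1 i1 i2 by (intro eqm_mult eqm_refl f_FP)
    also have "\<dots> = FP c (2*n)" using q qd_FP by simp
    finally have "eqm m (B * f_fps c * f_fps c) (FP c (2*n))" .
    moreover have "eqm m (FP c (2*n)) (f_fps c)"
      by (rule eqm_sym, rule f_FP) (use c1 assms in auto)
    ultimately have "eqm m (B * f_fps c * f_fps c) (f_fps c)" by (rule eqm_trans)
    then have "eqm m (B * f_fps c * f_fps c * inverse (f_fps c)) (f_fps c * inverse (f_fps c))"
      by (rule eqm_mult) simp
    then have "eqm m (B * f_fps c) 1"
      by (simp add: inverse_mult_eq_1' mult.assoc)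
    then show "eqm m (B * f_fps c * fps_X ^ e) (fps_X ^ e)"
      using eqm_mult[of m "B * f_fps c" 1 "fps_X ^ e" "fps_X ^ e"] by simp
  qed
qed

lemma sum_X_nth: "(\<Sum>i\<in>A. (fps_X :: rat fps) ^ g i) $ j = of_nat (card {i\<in>A. g i = j})" if "finite A"
proof -
  have "(\<Sum>i\<in>A. (fps_X :: rat fps) ^ g i) $ j = (\<Sum>i\<in>A. if j = g i then 1 else 0)"
    by (simp add: fps_sum_nth)
  also have "\<dots> = (\<Sum>i\<in>{i\<in>A. g i = j}. 1)"
    using that by (simp add: sum.If_cases Int_def eq_commute conj_commute)
  finally show ?thesis by simp
qed

lemma jtp_lim:
  assumes "a < c" "2 * m + 2 \<le> n"
  shows "eqm m (LL a c n * f_fps c) (Theta a c)"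
proof -
  define e where "e i = nat (eei c a (int i - int n))" for i
  have n1: "n \<ge> 1" using assms by auto
  have "LL a c n * f_fps c = (\<Sum>i\<le>2*n. qb (fps_X ^ c) (2*n) i * fps_X ^ e i) * f_fps c"
    unfolding fin_jtp[OF assms(1) n1] e_def by (rule refl)
  also have "\<dots> = (\<Sum>i\<le>2*n. qb (fps_X ^ c) (2*n) i * fps_X ^ e i * f_fps c)"
    by (rule sum_distrib_right)
  also have "\<dots> = (\<Sum>i\<le>2*n. qb (fps_X ^ c) (2*n) i * f_fps c * fps_X ^ e i)"
    by (rule sum.cong[OF refl]) (simp only: mult.assoc mult.commute[of "fps_X ^ e _" "f_fps c"])
  also have "eqm m \<dots> (\<Sum>i\<le>2*n. fps_X ^ e i)"
  proof (rule eqm_sum)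
    fix i assume "i \<in> {..2*n}"
    then have "i \<le> 2 * n" by simp
    then show "eqm m (qb (fps_X ^ c) (2*n) i * f_fps c * fps_X ^ e i) (fps_X ^ e i)"
      unfolding e_def by (rule term_eqm[OF assms])
  qed
  also have "eqm m \<dots> (Theta a c)"
    unfolding eqm_def
  proof (intro allI impI)
    fix j assume j: "j \<le> m"
    have "(\<Sum>i\<le>2*n. (fps_X :: rat fps) ^ e i) $ j = of_nat (card {i\<in>{..2*n}. e i = j})"
      by (rule sum_X_nth) simp
    also have "card {i\<in>{..2*n}. e i = j} = card {k::int. eei c a k = int j}"
    proof (rule bij_betw_same_card, rule bij_betw_byWitness[where f' = "\<lambda>k. nat (k + int n)"])
      show "\<forall>i\<in>{i \<in> {..2 * n}. e i = j}. nat (int i - int n + int n) = i" by auto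
      show "(\<lambda>i. int i - int n) ` {i \<in> {..2 * n}. e i = j} \<subseteq> {k. eei c a k = int j}"
        using eei_bound(1)[OF assms(1)] by (auto simp: e_def)
      have bd: "\<bar>k\<bar> \<le> int n" if "eei c a k = int j" for k
        using eei_bound(2)[OF assms(1), of k] that j assms by linarith
      show "\<forall>k\<in>{k. eei c a k = int j}. int (nat (k + int n)) - int n = k"
      proof
        fix k assume "k \<in> {k. eei c a k = int j}"
        then have "\<bar>k\<bar> \<le> int n" using bd by auto
        then show "int (nat (k + int n)) - int n = k" by auto
      qed
      show "(\<lambda>k. nat (k + int n)) ` {k. eei c a k = int j} \<subseteq> {i \<in> {..2 * n}. e i = j}"
      proof
        fix i assume "i \<in> (\<lambda>k. nat (k + int n)) ` {k. eei c a k = int j}"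
        then obtain k where k: "eei c a k = int j" "i = nat (k + int n)" by auto
        have "\<bar>k\<bar> \<le> int n" using bd k by auto
        then have "int i - int n = k" "i \<le> 2 * n" using k by auto
        then show "i \<in> {i \<in> {..2 * n}. e i = j}" using k by (auto simp: e_def)
      qed
    qed
    finally show "(\<Sum>i\<le>2*n. (fps_X :: rat fps) ^ e i) $ j = Theta a c $ j"
      by (simp add: Theta_def)
  qed
  finally show ?thesis .
qed

lemma prod_shift1: "(\<Prod>j\<in>{1..(n::nat)}. g j) = (\<Prod>t<n. g (t+1))"
  by (rule prod.reindex_bij_witness[of _ "\<lambda>t. t + 1" "\<lambda>j. j - 1"]) auto

definition FPP :: "nat \<Rightarrow> nat \<Rightarrow> rat fps" where
  "FPP k N = (\<Prod>j\<in>{1..N}. 1 + fps_X ^ (k * j))"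

lemma FPP_0[simp]: "k \<ge> 1 \<Longrightarrow> FPP k N $ 0 = 1"
  unfolding FPP_def by (induction N) (auto simp: prod.nat_ivl_Suc')

lemma FPP_FP: "FPP k N * FP k N = FP (2*k) N"
  unfolding FPP_def FP_def prod.distrib[symmetric]
proof (rule prod.cong)
  fix j show "(1 + fps_X ^ (k * j)) * (1 - fps_X ^ (k * j)) = 1 - (fps_X :: rat fps) ^ (2 * k * j)"
    by (simp add: algebra_simps power_add[symmetric] mult_2)
qed simp

lemma FPP_eq: "k \<ge> 1 \<Longrightarrow> FPP k N = FP (2*k) N * inverse (FP k N)"
  by (metis FPP_FP FP_0 inverse_mult_eq_1' mult.assoc mult.right_neutral one_neq_zero)

lemma FPP_eqm: assumes "k \<ge> 1" "m \<le> N" shows "eqm m (FPP k N) (f_fps (2*k) * inverse (f_fps k))"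
proof -
  have "eqm m (FP (2*k) N) (f_fps (2*k))" by (rule eqm_sym, rule f_FP) (use assms in auto)
  moreover have "eqm m (inverse (FP k N)) (inverse (f_fps k))"
    by (rule eqm_inverse, rule eqm_sym, rule f_FP) (use assms in auto)
  ultimately show ?thesis unfolding FPP_eq[OF assms(1)] by (rule eqm_mult)
qed

definition psi :: "rat fps" where "psi = f_fps 2 ^ 2 * inverse (f_fps 1)"
definition Aq :: "rat fps" where "Aq = f_fps 2 * f_fps 3 ^ 2 * inverse (f_fps 1 * f_fps 6)"

lemma LL01: "LL 0 1 (Suc n) = 2 * FPP 1 n * FPP 1 (Suc n)"
proof -
  have "(\<Prod>t<Suc n. 1 + fps_X ^ (0 + 1 * t)) = (1 + fps_X ^ 0) * (\<Prod>t<n. 1 + (fps_X :: rat fps) ^ (Suc t))"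
    by (simp only: prod.lessThan_Suc_shift) simp
  also have "(\<Prod>t<n. 1 + (fps_X :: rat fps) ^ (Suc t)) = FPP 1 n"
    unfolding FPP_def by (rule prod.reindex_bij_witness[of _ "\<lambda>j. j - 1" "\<lambda>t. t + 1"]) auto
  finally have a: "(\<Prod>t<Suc n. 1 + fps_X ^ (0 + 1 * t)) = 2 * FPP 1 n" by simp
  have b: "(\<Prod>j\<in>{1..Suc n}. 1 + fps_X ^ (1 * j - 0)) = FPP 1 (Suc n)"
    unfolding FPP_def by simp
  show ?thesis unfolding LL_def a b ..
qed

lemma theta01: "Theta 0 1 = 2 * psi"
proof (rule eqm_all)
  fix m :: nat
  define n where "n = 2 * m + 2"
  have "eqm m (Theta 0 1) (LL 0 1 (Suc n) * f_fps 1)"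
    by (rule eqm_sym, rule jtp_lim) (auto simp: n_def)
  also have "LL 0 1 (Suc n) * f_fps 1 = 2 * FPP 1 n * FPP 1 (Suc n) * f_fps 1" unfolding LL01 ..
  also have "eqm m \<dots> (2 * (f_fps 2 * inverse (f_fps 1)) * (f_fps 2 * inverse (f_fps 1)) * f_fps 1)"
    using FPP_eqm[of 1 m n] FPP_eqm[of 1 m "Suc n"] unfolding n_def
    by (intro eqm_mult eqm_refl) auto
  also have "2 * (f_fps 2 * inverse (f_fps 1)) * (f_fps 2 * inverse (f_fps 1)) * f_fps 1 = 2 * psi"
  proof -
    have "inverse (f_fps 1) * f_fps 1 = 1" by (rule inverse_mult_eq_1) simp
    then show ?thesis unfolding psi_def by (simp add: power2_eq_square mult_ac)
  qed
  finally show "eqm m (Theta 0 1) (2 * psi)" .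
qed

lemma LL13: "LL 1 3 n * FPP 3 n = FPP 1 (3*n)"
proof -
  have "(\<Prod>j\<in>{1..n}. 1 + fps_X ^ (3 * j - 1)) = (\<Prod>t<n. 1 + (fps_X :: rat fps) ^ (3 * (t+1) - 1))"
    by (rule prod_shift1)
  also have "\<dots> = (\<Prod>t<n. 1 + (fps_X :: rat fps) ^ (3 * t + 2))"
    by (rule prod.cong) auto
  finally have a: "(\<Prod>j\<in>{1..n}. 1 + fps_X ^ (3 * j - 1)) = (\<Prod>t<n. 1 + (fps_X :: rat fps) ^ (3 * t + 2))" .
  have b: "FPP 3 n = (\<Prod>t<n. 1 + (fps_X :: rat fps) ^ (3 * t + 3))"
    unfolding FPP_def prod_shift1 by (simp add: algebra_simps)
  have c: "FPP 1 (3*n) = (\<Prod>t<n. (1 + fps_X ^ (3 * t + 1)) * (1 + fps_X ^ (3 * t + 2)) * (1 + fps_X ^ (3 * t + 3)))"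
    unfolding FPP_def group3 by simp
  show ?thesis unfolding LL_def a b c prod.distrib by (simp add: add.commute)
qed

lemma theta13: "Theta 1 3 = Aq"
proof (rule eqm_all)
  fix m :: nat
  define n where "n = 2 * m + 2"
  have LLe: "LL 1 3 n = FPP 1 (3*n) * inverse (FPP 3 n)"
    using LL13[of n] by (metis FPP_0 inverse_mult_eq_1' mult.assoc mult.right_neutral one_neq_zero le_add2 numeral_le_iff semiring_norm(72) one_le_numeral)
  have "eqm m (Theta 1 3) (LL 1 3 n * f_fps 3)"
    by (rule eqm_sym, rule jtp_lim) (auto simp: n_def)
  also have "LL 1 3 n * f_fps 3 = FPP 1 (3*n) * inverse (FPP 3 n) * f_fps 3" unfolding LLe ..
  also have "eqm m \<dots> ((f_fps 2 * inverse (f_fps 1)) * inverse (f_fps 6 * inverse (f_fps 3)) * f_fps 3)"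
  proof (intro eqm_mult eqm_refl)
    show "eqm m (FPP 1 (3*n)) (f_fps 2 * inverse (f_fps 1))" using FPP_eqm[of 1 m "3*n"] by (simp add: n_def)
    show "eqm m (inverse (FPP 3 n)) (inverse (f_fps 6 * inverse (f_fps 3)))"
      by (rule eqm_inverse) (use FPP_eqm[of 3 m n] in \<open>simp_all add: n_def\<close>)
  qed
  also have "(f_fps 2 * inverse (f_fps 1)) * inverse (f_fps 6 * inverse (f_fps 3)) * f_fps 3 = Aq"
    unfolding Aq_def fps_inverse_mult by (simp add: power2_eq_square mult_ac)
  finally show "eqm m (Theta 1 3) Aq" .
qed

lemma kk3: "(k * (k - 1)) mod 3 \<noteq> (1::int)" and kk3': "(k * (k - 1)) mod 3 = 0 \<Longrightarrow> k mod 3 = 0 \<or> k mod 3 = 1"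
proof -
  define r where "r = k mod 3"
  define q where "q = k div 3"
  have k: "k = 3 * q + r" unfolding r_def q_def by simp
  have r: "r = 0 \<or> r = 1 \<or> r = 2" unfolding r_def by presburger
  have e: "k * (k - 1) = 3 * (q * (3 * q + 2 * r - 1)) + r * (r - 1)" unfolding k by (simp add: algebra_simps)
  have m: "(k * (k - 1)) mod 3 = (r * (r - 1)) mod 3" unfolding e by simp
  show "(k * (k - 1)) mod 3 \<noteq> 1" unfolding m using r by auto
  show "(k * (k - 1)) mod 3 = 0 \<Longrightarrow> k mod 3 = 0 \<or> k mod 3 = 1" unfolding m r_def[symmetric] using r by auto
qed

definition S1 :: "nat \<Rightarrow> int set" where "S1 n = {k. eei 1 0 k = int n}"
definition S2 :: "nat \<Rightarrow> int set" where "S2 n = {k. eei 3 1 k = int n}"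

lemma S1_iff: "k \<in> S1 n \<longleftrightarrow> k * (k - 1) = 2 * int n"
  using eei2[of 1 0 k] unfolding S1_def by auto
lemma S2_iff: "k \<in> S2 n \<longleftrightarrow> 3 * k * k - k = 2 * int n"
  using eei2[of 3 1 k] unfolding S2_def by (auto simp: algebra_simps)

lemma psi_nth: "psi $ n = of_nat (card (S1 n)) / 2"
proof -
  have "Theta 0 1 $ n = 2 * psi $ n" using theta01 by (metis fps_mult_left_const_nth fps_numeral_fps_const)
  then show ?thesis unfolding Theta_def S1_def by simp
qed

lemma Aq_nth: "Aq $ n = of_nat (card (S2 n))"
  using theta13 unfolding Theta_def S2_def by (metis fps_nth_Abs_fps)

lemma S1_empty: "n mod 3 = 2 \<Longrightarrow> S1 n = {}"
proof (rule ccontr)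
  assume n: "n mod 3 = 2" and "S1 n \<noteq> {}"
  then obtain k where "k \<in> S1 n" by auto
  then have "k * (k - 1) = 2 * int n" by (simp add: S1_iff)
  moreover have "(2 * int n) mod 3 = 1" using n by presburger
  ultimately show False using kk3[of k] by simp
qed

lemma S2_finite: "finite (S2 n)"
proof (rule finite_subset)
  show "S2 n \<subseteq> {- int n - 1 .. int n + 1}"
  proof
    fix k assume "k \<in> S2 n"
    then have "eei 3 1 k = int n" by (simp add: S2_def)
    then have "\<bar>k\<bar> \<le> int n + 1" using eei_bound(2)[of 1 3 k] by simp
    then show "k \<in> {- int n - 1 .. int n + 1}" by auto
  qed
qed simp

lemma S1_S2: "S1 (3 * n) = (\<lambda>k. 3 * k) ` S2 n \<union> (\<lambda>k. 1 - 3 * k) ` S2 n"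
proof
  show "S1 (3 * n) \<subseteq> (\<lambda>k. 3 * k) ` S2 n \<union> (\<lambda>k. 1 - 3 * k) ` S2 n"
  proof
    fix k assume "k \<in> S1 (3 * n)"
    then have kk: "k * (k - 1) = 6 * int n" by (simp add: S1_iff)
    then have "(k * (k - 1)) mod 3 = 0" by simp
    then have "k mod 3 = 0 \<or> k mod 3 = 1" by (rule kk3')
    then show "k \<in> (\<lambda>k. 3 * k) ` S2 n \<union> (\<lambda>k. 1 - 3 * k) ` S2 n"
    proof
      assume "k mod 3 = 0"
      then obtain q where q: "k = 3 * q" by auto
      have "3 * q * q - q = 2 * int n" using kk unfolding q by (simp add: algebra_simps)
      then have "q \<in> S2 n" by (simp add: S2_iff)
      then show ?thesis using q by auto
    next
      assume "k mod 3 = 1"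
      then obtain q where q: "k = 3 * q + 1" by (metis mult_div_mod_eq add.commute)
      have "3 * (- q) * (- q) - (- q) = 2 * int n" using kk unfolding q by (simp add: algebra_simps)
      then have "- q \<in> S2 n" by (simp only: S2_iff)
      moreover have "k = 1 - 3 * (- q)" using q by simp
      ultimately show ?thesis by blast
    qed
  qed
  show "(\<lambda>k. 3 * k) ` S2 n \<union> (\<lambda>k. 1 - 3 * k) ` S2 n \<subseteq> S1 (3 * n)"
    by (auto simp: S1_iff S2_iff algebra_simps)
qed

lemma card_S1: "card (S1 (3 * n)) = 2 * card (S2 n)"
proof -
  have d: "(\<lambda>k. 3 * k) ` S2 n \<inter> (\<lambda>k. 1 - 3 * k) ` S2 n = {}" by (auto, presburger)
  have i1: "inj_on (\<lambda>k::int. 3 * k) (S2 n)" by (auto simp: inj_on_def)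
  have i2: "inj_on (\<lambda>k::int. 1 - 3 * k) (S2 n)" by (auto simp: inj_on_def)
  show ?thesis unfolding S1_S2
    by (subst card_Un_disjoint) (use d S2_finite i1 i2 in \<open>auto simp: card_image\<close>)
qed

lemma pr2_psi: "pr 2 psi = 0"
  by (rule fps_ext) (auto simp: pr_def psi_nth S1_empty)

lemma pr0_psi: "pr 0 psi = E3 Aq"
proof (rule fps_ext)
  fix n show "pr 0 psi $ n = E3 Aq $ n"
  proof (cases "3 dvd n")
    case True
    then obtain j where j: "n = 3 * j" by auto
    show ?thesis unfolding j by (simp add: pr_def E3_nth psi_nth Aq_nth card_S1)
  next
    case False
    then show ?thesis by (auto simp: pr_def E3_nth)
  qed
qed

lemma inv_pow: "inverse ((A :: rat fps) ^ k) = inverse A ^ k"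
  by (induction k) (auto simp: fps_inverse_mult)

lemma NN_power: "NN (A ^ k) = NN A ^ k"
  by (induction k) (auto simp: NN_mult)

lemma NN_f:
  assumes "k = 1 \<or> k = 2"
  shows "NN (f_fps k) * f_fps (9*k) = f_fps (3*k) ^ 4"
proof (rule eqm_all)
  fix m :: nat
  have k1: "k \<ge> 1" using assms by auto
  have "eqm m (NN (f_fps k) * f_fps (9*k)) (NN (FP k (3*m)) * FP (9*k) m)"
    using k1 by (intro eqm_mult NN_eqm f_FP) auto
  also have "NN (FP k (3*m)) * FP (9*k) m = FP (3*k) (3*m) * FP (3*k) m ^ 3"
    by (rule NN_FP) fact
  also have "eqm m \<dots> (f_fps (3*k) * f_fps (3*k) ^ 3)"
    using k1 by (intro eqm_mult eqm_power eqm_sym[OF f_FP]) auto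
  also have "f_fps (3*k) * f_fps (3*k) ^ 3 = f_fps (3*k) ^ 4"
    by (simp add: power_Suc[symmetric] del: power_Suc)
  finally show "eqm m (NN (f_fps k) * f_fps (9*k)) (f_fps (3*k) ^ 4)" .
qed

lemma NN_f': "k = 1 \<or> k = 2 \<Longrightarrow> NN (f_fps k) = f_fps (3*k) ^ 4 * inverse (f_fps (9*k))"
  using NN_f[of k] by (metis f_fps_0 inverse_mult_eq_1' mult.assoc mult.right_neutral one_neq_zero)

lemma cls_const: "cls 0 (fps_const c)" by (auto simp: cls_def)

lemma cls_NN: "cls 0 (NN H)"
proof -
  have p: "cls 0 (pr 0 H)" "cls 1 (pr 1 H)" "cls 2 (pr 2 H)" by (rule cls_pr)+
  have a: "cls 0 (pr 0 H ^ 3)"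
    using cls_mult[OF cls_mult[OF p(1) p(1)] p(1)] by (simp add: power3_eq_cube)
  have b: "cls 0 (pr 1 H ^ 3)"
    using cls_mult[OF cls_mult[OF p(2) p(2)] p(2)] by (simp add: power3_eq_cube)
  have c: "cls 0 (pr 2 H ^ 3)"
    using cls_mult[OF cls_mult[OF p(3) p(3)] p(3)] by (simp add: power3_eq_cube)
  have d: "cls 0 (3 * pr 0 H * pr 1 H * pr 2 H)"
    using cls_mult[OF cls_mult[OF cls_mult[OF cls_const[of 3] p(1)] p(2)] p(3)]
    by (simp add: fps_numeral_fps_const)
  show ?thesis unfolding NN_def diff_conv_add_uminus
    by (intro cls_add cls_uminus a b c d)
qed

lemma pr_diff: "pr r (A - B) = pr r A - pr r B" by (rule fps_ext) (auto simp: pr_def)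

lemma pr0_inv_psi: "pr 0 (inverse psi) = E3 Aq ^ 2 * inverse (NN psi)"
proof -
  define a where "a = E3 Aq"
  define x where "x = pr 1 psi"
  have ca: "cls 0 a" unfolding a_def by (rule cls_E3)
  have cx: "cls 1 x" unfolding x_def by (rule cls_pr)
  have psi0: "psi $ 0 = 1" by (simp add: psi_def power2_eq_square)
  have d: "psi = a + x" unfolding a_def x_def using pr_decomp[of psi] pr0_psi pr2_psi by simp
  have N: "NN psi = a ^ 3 + x ^ 3"
    unfolding NN_def pr0_psi pr2_psi a_def[symmetric] x_def[symmetric] by simp
  have N0: "NN psi $ 0 \<noteq> 0" by (simp add: NN_0 psi0)
  have "psi * (a * a - a * x + x * x) = (a + x) * (a * a - a * x + x * x)" using d by simp
  also have "\<dots> = a ^ 3 + x ^ 3" by (simp add: algebra_simps power3_eq_cube)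
  finally have eq: "psi * (a * a - a * x + x * x) = NN psi" unfolding N .
  have p0: "psi $ 0 \<noteq> 0" using psi0 by simp
  have "inverse psi = inverse psi * (NN psi * inverse (NN psi))" using inverse_mult_eq_1'[OF N0] by simp
  also have "\<dots> = (inverse psi * psi) * (a * a - a * x + x * x) * inverse (NN psi)"
    unfolding eq[symmetric] by (simp only: mult.assoc)
  also have "\<dots> = (a * a - a * x + x * x) * inverse (NN psi)"
    using inverse_mult_eq_1[OF p0] by simp
  finally have inv: "inverse psi = (a * a - a * x + x * x) * inverse (NN psi)" .
  have cW: "cls 0 (inverse (NN psi))" by (rule cls_inverse[OF cls_NN N0])
  have "pr 0 (inverse psi) = inverse (NN psi) * pr 0 (a * a - a * x + x * x)"
    unfolding inv by (subst mult.commute, rule pr_cls0_mult[OF cW])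
  also have "pr 0 (a * a - a * x + x * x) = a * a"
  proof -
    have "pr 0 (a * a) = a * a" using pr_cls[OF cls_mult[OF ca ca], of 0] by simp
    moreover have "pr 0 (a * x) = 0" using pr_cls[OF cls_mult[OF ca cx], of 0] by simp
    moreover have "pr 0 (x * x) = 0" using pr_cls[OF cls_mult[OF cx cx], of 0] by simp
    ultimately show ?thesis by (simp add: pr_add pr_diff)
  qed
  finally show ?thesis unfolding a_def by (simp add: power2_eq_square mult.commute)
qed

definition GG :: "rat fps" where "GG = f_fps 1 * f_fps 3 * inverse (f_fps 2 ^ 2)"

lemma alg1:
  fixes u3 u6 u9 u18 i3 i6 i9 i18 :: "'a::comm_ring_1"
  assumes "u3*i3 = 1" "u6*i6 = 1" "u9*i9 = 1" "u18*i18 = 1"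
  shows "u3 * (u6 * u9^2 * i3 * i18)^2 * ((i6^4 * u18)^2 * (u3^4 * i9)) = (u3 * u9 * i6^2)^3"
proof -
  have "u3 * (u6 * u9^2 * i3 * i18)^2 * ((i6^4 * u18)^2 * (u3^4 * i9))
      = (u3 * u9 * i6^2)^3 * ((u3*i3)^2 * (u6*i6)^2 * (u9*i9) * (u18*i18)^2)"
    by (simp add: algebra_simps power2_eq_square power3_eq_cube power4_eq_xxxx)
  then show ?thesis unfolding assms by simp
qed

lemma U3_GG: "U3 GG = GG ^ 3"
proof (rule E3_inj)
  define u where "u k = f_fps k" for k
  define i where "i k = inverse (f_fps k)" for k
  have ui: "u k * i k = 1" for k unfolding u_def i_def by (rule inverse_mult_eq_1') simp
  have inv_inv: "inverse (i k) = u k" for k unfolding u_def i_def by simp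
  have E3u: "E3 (u k) = u (3*k)" if "k \<ge> 1" for k unfolding u_def using E3_f[OF that] .
  have E3i: "E3 (i k) = i (3*k)" if "k \<ge> 1" for k unfolding i_def
    using E3_inverse[of "f_fps k"] E3_f[OF that] by simp
  have psi: "psi = u 2 ^ 2 * i 1" unfolding psi_def u_def i_def ..
  have Aq: "Aq = u 2 * u 3 ^ 2 * (i 1 * i 6)" unfolding Aq_def u_def i_def fps_inverse_mult ..
  have G: "GG = u 1 * u 3 * i 2 ^ 2" unfolding GG_def u_def i_def inv_pow ..
  have ipsi: "inverse psi = i 2 ^ 2 * u 1" unfolding psi fps_inverse_mult inv_pow inv_inv by (simp add: i_def u_def)
  have EA: "E3 Aq = u 6 * u 9 ^ 2 * (i 3 * i 18)"
    unfolding Aq E3_mult E3_power by (simp add: E3u E3i)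
  have N1: "NN (u 1) = u 3 ^ 4 * i 9" unfolding u_def i_def using NN_f'[of 1] by simp
  have N2: "NN (u 2) = u 6 ^ 4 * i 18" unfolding u_def i_def using NN_f'[of 2] by simp
  have Ni1: "NN (i 1) = i 3 ^ 4 * u 9"
    unfolding i_def NN_inverse[OF f_fps_0[THEN ssubst, of "\<lambda>x. x \<noteq> 0", OF one_neq_zero]]
    using N1 unfolding u_def i_def by (simp add: fps_inverse_mult inv_pow)
  have W: "inverse (NN psi) = (i 6 ^ 4 * u 18) ^ 2 * (u 3 ^ 4 * i 9)"
    unfolding psi NN_mult NN_power N2 Ni1 fps_inverse_mult inv_pow inv_inv by (simp add: i_def u_def)
  have cu3: "cls 0 (u 3)" using cls_E3[of "u 1"] E3u[of 1] by simp
  have GG': "GG = u 3 * inverse psi" unfolding G ipsi by (simp add: mult_ac)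
  have "E3 (U3 GG) = pr 0 GG" by (rule E3_U3)
  also have "pr 0 GG = u 3 * pr 0 (inverse psi)" unfolding GG' by (rule pr_cls0_mult[OF cu3])
  also have "\<dots> = u 3 * (u 6 * u 9 ^ 2 * (i 3 * i 18)) ^ 2 * ((i 6 ^ 4 * u 18) ^ 2 * (u 3 ^ 4 * i 9))"
    unfolding pr0_inv_psi EA W by (simp add: mult.assoc)
  also have "\<dots> = (u 3 * u 9 * i 6 ^ 2) ^ 3"
    using alg1[OF ui[of 3] ui[of 6] ui[of 9] ui[of 18]] by (simp add: mult.assoc)
  also have "\<dots> = E3 (GG ^ 3)"
    unfolding G E3_power E3_mult by (simp add: E3u E3i)
  finally show "E3 (U3 GG) = E3 (GG ^ 3)" .
qed

definition NG :: "rat fps \<Rightarrow> rat fps" where "NG H = H oo (- fps_X)"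

lemma NG_nth: "NG H $ n = (-1) ^ n * H $ n"
  unfolding NG_def fps_compose_uminus' by simp
lemma NG_mult: "NG (A * B) = NG A * NG B"
  unfolding NG_def by (rule fps_compose_mult_distrib) simp
lemma NG_one[simp]: "NG 1 = 1" unfolding NG_def by simp
lemma NG_power: "NG (A ^ k) = NG A ^ k"
  by (induction k) (simp_all add: NG_mult)
lemma NG_prod: "NG (prod f S) = prod (\<lambda>i. NG (f i)) S"
  unfolding NG_def by (rule fps_compose_prod_distrib) simp
lemma NG_inverse: "A $ 0 \<noteq> 0 \<Longrightarrow> NG (inverse A) = inverse (NG A)"
  unfolding NG_def by (rule fps_inverse_compose) auto
lemma NG_eqm: "eqm m A B \<Longrightarrow> eqm m (NG A) (NG B)"
  unfolding eqm_def NG_nth by auto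
lemma NG_E3: "NG (E3 H) = E3 (NG H)"
proof (rule fps_ext)
  fix n show "NG (E3 H) $ n = E3 (NG H) $ n"
  proof (cases "3 dvd n")
    case True
    then obtain q where q: "n = 3 * q" by auto
    have "(-1::rat) ^ (3 * q) = (-1) ^ q" by (simp add: power_mult)
    then show ?thesis unfolding q by (simp add: NG_nth E3_nth)
  qed (simp add: NG_nth E3_nth)
qed
lemma NG_U3: "U3 (NG H) = NG (U3 H)"
proof (rule fps_ext)
  fix n
  have "(-1::rat) ^ (3 * n) = (-1) ^ n" by (simp add: power_mult)
  then show "U3 (NG H) $ n = NG (U3 H) $ n" by (simp add: U3_def NG_nth)
qed

lemma NG_Xp: "NG (fps_X ^ k) = (- 1) ^ k * fps_X ^ k"
proof -
  have "NG (fps_X ^ k) = (- fps_X) ^ k" unfolding NG_def by (rule fps_X_power_compose) simp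
  also have "\<dots> = (- 1) ^ k * fps_X ^ k" by (rule power_minus)
  finally show ?thesis .
qed


lemma NG_1mX: "NG (1 - fps_X ^ k) = 1 - (- 1) ^ k * fps_X ^ k"
  unfolding NG_def fps_compose_sub_distrib using NG_Xp[of k] by (simp add: NG_def)

lemma NG_FP2: "NG (FP 2 N) = FP 2 N"
  unfolding FP_def NG_prod NG_1mX by (simp add: power_mult)

lemma NG_f2: "NG (f_fps 2) = f_fps 2"
proof (rule eqm_all)
  fix m :: nat
  have "eqm m (NG (f_fps 2)) (NG (FP 2 m))" by (rule NG_eqm, rule f_FP) auto
  also have "NG (FP 2 m) = FP 2 m" by (rule NG_FP2)
  also have "eqm m \<dots> (f_fps 2)" by (rule eqm_sym, rule f_FP) auto
  finally show "eqm m (NG (f_fps 2)) (f_fps 2)" .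
qed

lemma NG_FP1: "NG (FP 1 (2*N)) * FP 1 (2*N) * FP 4 N = FP 2 (2*N) * FP 2 N ^ 2"
proof -
  define O1 :: "rat fps" where "O1 = (\<Prod>t<N. 1 + fps_X ^ (2*t+1))"
  define O2 :: "rat fps" where "O2 = (\<Prod>t<N. 1 - fps_X ^ (2*t+1))"
  define O3 :: "rat fps" where "O3 = (\<Prod>t<N. 1 - fps_X ^ (4*t+2))"
  have F2: "FP 2 N = (\<Prod>t<N. 1 - fps_X ^ (2*t+2))" unfolding FP_shift by (simp add: algebra_simps)
  have F4: "FP 4 N = (\<Prod>t<N. 1 - fps_X ^ (4*t+4))" unfolding FP_shift by (simp add: algebra_simps)
  have a: "NG (FP 1 (2*N)) = O1 * FP 2 N"
  proof -
    have "NG (FP 1 (2*N)) = (\<Prod>t<N. (1 - (-1) ^ (2*t+1) * fps_X ^ (2*t+1)) * (1 - (-1) ^ (2*t+2) * fps_X ^ (2*t+2)))"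
      unfolding FP_def group2 NG_prod NG_mult NG_1mX by (simp only: mult_1)
    also have "\<dots> = (\<Prod>t<N. (1 + fps_X ^ (2*t+1)) * (1 - fps_X ^ (2*t+2)))"
    proof (rule prod.cong)
      fix t
      have "(-1::rat fps) ^ (2*t+1) = -1" "(-1::rat fps) ^ (2*t+2) = 1"
        by (simp_all add: power_add power_mult)
      then show "(1 - (-1) ^ (2*t+1) * fps_X ^ (2*t+1)) * (1 - (-1) ^ (2*t+2) * fps_X ^ (2*t+2))
          = (1 + fps_X ^ (2*t+1)) * (1 - (fps_X :: rat fps) ^ (2*t+2))" by simp
    qed simp
    finally show ?thesis unfolding O1_def F2 prod.distrib .
  qed
  have b: "FP 1 (2*N) = O2 * FP 2 N"
    unfolding FP_def[of 1] group2 O2_def F2 prod.distrib by simp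
  have c: "FP 2 (2*N) = O3 * FP 4 N"
  proof -
    have "FP 2 (2*N) = (\<Prod>t<N. (1 - fps_X ^ (2 * (2*t+1))) * (1 - fps_X ^ (2 * (2*t+2))))"
      unfolding FP_def[of 2] group2 ..
    also have "\<dots> = (\<Prod>t<N. (1 - fps_X ^ (4*t+2)) * (1 - fps_X ^ (4*t+4)))"
    proof (rule prod.cong)
      fix t :: nat
      have "2 * (2*t+1) = 4*t+2" "2 * (2*t+2) = 4*t+4" by simp_all
      then show "(1 - fps_X ^ (2 * (2*t+1))) * (1 - fps_X ^ (2 * (2*t+2)))
          = (1 - fps_X ^ (4*t+2)) * (1 - (fps_X :: rat fps) ^ (4*t+4))" by (simp only:)
    qed simp
    finally show ?thesis unfolding O3_def F4 prod.distrib .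
  qed
  have d: "O1 * O2 = O3"
    unfolding O1_def O2_def O3_def prod.distrib[symmetric]
    by (rule prod.cong) (simp_all add: algebra_simps power_add[symmetric] mult_2)
  show ?thesis unfolding a unfolding b c d[symmetric] by (simp add: power2_eq_square mult_ac)
qed

lemma NG_f1: "NG (f_fps 1) * f_fps 1 * f_fps 4 = f_fps 2 ^ 3"
proof (rule eqm_all)
  fix m :: nat
  have "eqm m (NG (f_fps 1) * f_fps 1 * f_fps 4) (NG (FP 1 (2*m)) * FP 1 (2*m) * FP 4 m)"
    by (intro eqm_mult NG_eqm f_FP) auto
  also have "\<dots> = FP 2 (2*m) * FP 2 m ^ 2" by (rule NG_FP1)
  also have "eqm m \<dots> (f_fps 2 * f_fps 2 ^ 2)"
    by (intro eqm_mult eqm_power eqm_sym[OF f_FP]) auto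
  also have "f_fps 2 * f_fps 2 ^ 2 = f_fps 2 ^ 3" by (simp add: power2_eq_square power3_eq_cube)
  finally show "eqm m (NG (f_fps 1) * f_fps 1 * f_fps 4) (f_fps 2 ^ 3)" .
qed

lemma NG_f1': "NG (f_fps 1) = f_fps 2 ^ 3 * inverse (f_fps 1 * f_fps 4)"
proof -
  have "(f_fps 1 * f_fps 4) $ 0 \<noteq> 0" by simp
  then show ?thesis using NG_f1
    by (metis inverse_mult_eq_1' mult.assoc mult.right_neutral)
qed

lemma NG_GG: "NG GG = P_gen"
proof -
  define u where "u k = f_fps k" for k
  define i where "i k = inverse (f_fps k)" for k
  have E3u: "E3 (u k) = u (3*k)" if "k \<ge> 1" for k unfolding u_def using E3_f[OF that] .
  have E3i: "E3 (i k) = i (3*k)" if "k \<ge> 1" for k unfolding i_def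
    using E3_inverse[of "f_fps k"] E3_f[OF that] by simp
  have n1: "NG (u 1) = u 2 ^ 3 * (i 1 * i 4)" unfolding u_def i_def NG_f1' fps_inverse_mult ..
  have n3: "NG (u 3) = u 6 ^ 3 * (i 3 * i 12)"
  proof -
    have "NG (u 3) = E3 (NG (u 1))" using E3u[of 1] NG_E3[of "u 1"] by simp
    also have "\<dots> = u 6 ^ 3 * (i 3 * i 12)" unfolding n1 E3_mult E3_power by (simp add: E3u E3i)
    finally show ?thesis .
  qed
  have n2: "NG (i 2) = i 2" unfolding i_def by (subst NG_inverse) (simp_all add: NG_f2)
  have "NG GG = NG (u 1) * NG (u 3) * NG (i 2) ^ 2"
    unfolding GG_def NG_mult NG_power inv_pow u_def i_def ..
  also have "\<dots> = u 2 ^ 3 * (i 1 * i 4) * (u 6 ^ 3 * (i 3 * i 12)) * i 2 ^ 2"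
    unfolding n1 n3 n2 ..
  also have "\<dots> = (u 2 * i 2) ^ 2 * (u 2 * u 6 ^ 3 * (i 1 * i 3 * i 4 * i 12))"
    by (simp add: algebra_simps power2_eq_square power3_eq_cube)
  also have "u 2 * i 2 = 1" unfolding u_def i_def by (rule inverse_mult_eq_1') simp
  also have "1 ^ 2 * (u 2 * u 6 ^ 3 * (i 1 * i 3 * i 4 * i 12)) = P_gen"
    unfolding P_gen_def u_def i_def fps_inverse_mult by (simp add: mult_ac)
  finally show ?thesis .
qed

theorem theorem4p4:
  shows "convolutive 3 P"
proof -
  have A: "Abs_fps P = P_gen" by (rule fps_ext) (simp add: P_def)
  have B: "Abs_fps (\<lambda>n. P (3 * n)) = U3 P_gen" by (rule fps_ext) (simp add: P_def U3_def)
  show ?thesis unfolding convolutive_def A B NG_GG[symmetric] NG_U3 U3_GG NG_power ..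
qed

end
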